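(* Let $n\ge 3$, let $d$ be an integer, and let $i,j\in[n-1]$ with $\lvert i-j\rvert=1$. Then \[ b_{n,d}(i,j)=b_{n-2,\,d-1}\quad\text{and}\quad p_{n,d}(i,j)=p_{n-2,\,d-1}. \]
   Context: For a word $w=w_1\cdots w_k$ of pairwise distinct positive integers, an index $t\in[k-1]$ is an ascent if $w_t<w_{t+1}$ and a descent if $w_t>w_{t+1}$; $\operatorname{des}(w)$ is the number of descents and the height is $h(w)=(\#\text{ascents})-(\#\text{descents})$ (so $h(w)=0$ if $k\le 1$). A word is ballot if every prefix has nonnegative height. A ballot permutation of $[n]$ is a permutation $\pi_1\cdots\pi_n$ (one-line notation) that is a ballot word. $\mathscr{B}_{n,d}$ is the set of ballot permutations of $[n]$ with exactly $d$ descents, $b_{n,d}=\lvert\mathscr{B}_{n,d}\rvert$ (so $b_{m,d}=0$ for $d<0$), and $b_{n,d}(i,j)$ is the number of $\pi\in\mathscr{B}_{n,d}$ containing $i\,n\,j$ as a factor, i.e. $\pi_t=i,\pi_{t+1}=n,\pi_{t+2}=j$ for some $t$. A cycle $(c_1c_2\cdots c_k)$ of a permutation means $c_1\mapsto c_2\mapsto\cdots\mapsto c_k\mapsto c_1$. Its cyclic descent number is $\operatorname{cdes}(c)=\lvert\{t\in[k]: c_t>c_{t+1}\}\rvert$ and cyclic ascent number $\operatorname{casc}(c)=\lvert\{t\in[k]: c_t<c_{t+1}\}\rvert$, where $c_{k+1}=c_1$; its cyclic weight is $w(c)=\min(\operatorname{cdes}(c),\operatorname{casc}(c))$, and the cyclic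 weight $w(\pi)$ of a permutation is the sum of the cyclic weights of its cycles. An odd order permutation is one all of whose cycles have odd length. $\mathscr{P}_{n,d}$ is the set of odd order permutations of $[n]$ with cyclic weight $d$, $p_{n,d}=\lvert\mathscr{P}_{n,d}\rvert$, and $p_{n,d}(i,j)$ is the number of $\pi\in\mathscr{P}_{n,d}$ containing $i\,n\,j$ as a cyclic factor, i.e. some cycle of $\pi$, written starting at a suitable element, contains $i,n,j$ consecutively (equivalently $\pi(i)=n$ and $\pi(n)=j$). *)

theory Defs
  imports "HOL-Combinatorics.Permutations"
begin

(* Words are lists of naturals; permutations of [n] in one-line notation are lists
   xs with distinct xs and set xs = {1..n}. Positions are 0-based in lists. *)

definition asc :: "nat list \<Rightarrow> nat" where
  "asc w = card {t. Suc t < length w \<and> w ! t < w ! Suc t}"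

definition des :: "nat list \<Rightarrow> nat" where
  "des w = card {t. Suc t < length w \<and> w ! t > w ! Suc t}"

definition height :: "nat list \<Rightarrow> int" where
  "height w = int (asc w) - int (des w)"

definition ballot :: "nat list \<Rightarrow> bool" where
  "ballot w \<longleftrightarrow> (\<forall>k \<le> length w. height (take k w) \<ge> 0)"

definition ballot_perms :: "nat \<Rightarrow> int \<Rightarrow> nat list set" where
  "ballot_perms n d = {w. distinct w \<and> set w = {1..n} \<and> ballot w \<and> int (des w) = d}"

definition b :: "nat \<Rightarrow> int \<Rightarrow> nat" where
  "b n d = card (ballot_perms n d)"

definition b_factor :: "nat \<Rightarrow> int \<Rightarrow> nat \<Rightarrow> nat \<Rightarrow> nat" where
  "b_factor n d i j = card {w \<in> ballot_perms n d.
      \<exists>t. t + 2 < length w \<and> w ! t = i \<and> w ! (t + 1) = n \<and> w ! (t + 2) = j}"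

definition cyc :: "(nat \<Rightarrow> nat) \<Rightarrow> nat \<Rightarrow> nat set" where
  "cyc \<pi> x = {(\<pi> ^^ k) x | k. True}"

definition cycles_of :: "nat \<Rightarrow> (nat \<Rightarrow> nat) \<Rightarrow> nat set set" where
  "cycles_of n \<pi> = cyc \<pi> ` {1..n}"

(* cyclic descents / ascents of the cycle C of \<pi>: positions c_t with c_t > c_{t+1} = \<pi> c_t *)
definition cdes :: "(nat \<Rightarrow> nat) \<Rightarrow> nat set \<Rightarrow> nat" where
  "cdes \<pi> C = card {y \<in> C. \<pi> y < y}"

definition casc :: "(nat \<Rightarrow> nat) \<Rightarrow> nat set \<Rightarrow> nat" where
  "casc \<pi> C = card {y \<in> C. y < \<pi> y}"

definition cweight :: "nat \<Rightarrow> (nat \<Rightarrow> nat) \<Rightarrow> nat" where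
  "cweight n \<pi> = (\<Sum>C \<in> cycles_of n \<pi>. min (cdes \<pi> C) (casc \<pi> C))"

definition odd_order :: "nat \<Rightarrow> (nat \<Rightarrow> nat) \<Rightarrow> bool" where
  "odd_order n \<pi> \<longleftrightarrow> (\<forall>C \<in> cycles_of n \<pi>. odd (card C))"

definition odd_perms :: "nat \<Rightarrow> int \<Rightarrow> (nat \<Rightarrow> nat) set" where
  "odd_perms n d = {\<pi>. \<pi> permutes {1..n} \<and> odd_order n \<pi> \<and> int (cweight n \<pi>) = d}"

definition p :: "nat \<Rightarrow> int \<Rightarrow> nat" where
  "p n d = card (odd_perms n d)"

(* i n j is a cyclic factor of \<pi> iff \<pi> i = n and \<pi> n = j *)
definition p_factor :: "nat \<Rightarrow> int \<Rightarrow> nat \<Rightarrow> nat \<Rightarrow> nat" where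
  "p_factor n d i j = card {\<pi> \<in> odd_perms n d. \<pi> i = n \<and> \<pi> n = j}"

end

theory Submission
  imports Defs "HOL-Combinatorics.Orbits"
begin


definition ascL :: "nat list \<Rightarrow> nat" where
  "ascL w = length (filter (\<lambda>(a,b). a < b) (zip w (tl w)))"
definition desL :: "nat list \<Rightarrow> nat" where
  "desL w = length (filter (\<lambda>(a,b). b < a) (zip w (tl w)))"

lemma asc_L: "asc w = ascL w"
  unfolding asc_def ascL_def length_filter_conv_card
  by (rule arg_cong[where f=card]) (auto simp: nth_tl)

lemma des_L: "des w = desL w"
  unfolding des_def desL_def length_filter_conv_card
  by (rule arg_cong[where f=card]) (auto simp: nth_tl)

lemma ascL_simps[simp]: "ascL [] = 0" "ascL [x] = 0"
  "ascL (x # y # w) = (if x < y then 1 else 0) + ascL (y # w)"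
  by (auto simp: ascL_def)

lemma desL_simps[simp]: "desL [] = 0" "desL [x] = 0"
  "desL (x # y # w) = (if y < x then 1 else 0) + desL (y # w)"
  by (auto simp: desL_def)

lemma height_L: "height w = int (ascL w) - int (desL w)"
  by (simp add: height_def asc_L des_L)

lemma ascL_app: "ascL (xs @ y # ys) = ascL (xs @ [y]) + ascL (y # ys)"
proof (induction xs)
  case Nil show ?case by simp
next
  case (Cons x xs)
  note IH = Cons.IH
  show ?case
  proof (cases xs)
    case Nil then show ?thesis by simp
  next
    case (Cons x' xs')
    have "ascL ((x # xs) @ y # ys) = (if x < x' then 1 else 0) + ascL (xs @ y # ys)" using Cons by simp
    moreover have "ascL ((x # xs) @ [y]) = (if x < x' then 1 else 0) + ascL (xs @ [y])" using Cons by simp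
    ultimately show ?thesis using IH by linarith
  qed
qed

lemma desL_app: "desL (xs @ y # ys) = desL (xs @ [y]) + desL (y # ys)"
proof (induction xs)
  case Nil show ?case by simp
next
  case (Cons x xs)
  note IH = Cons.IH
  show ?case
  proof (cases xs)
    case Nil then show ?thesis by simp
  next
    case (Cons x' xs')
    have "desL ((x # xs) @ y # ys) = (if x' < x then 1 else 0) + desL (xs @ y # ys)" using Cons by simp
    moreover have "desL ((x # xs) @ [y]) = (if x' < x then 1 else 0) + desL (xs @ [y])" using Cons by simp
    ultimately show ?thesis using IH by linarith
  qed
qed

lemma height_app: "height (xs @ y # ys) = height (xs @ [y]) + height (y # ys)"
  unfolding height_L ascL_app[of xs y ys] desL_app[of xs y ys] by simp

lemma last_swap:
  assumes "\<forall>x\<in>set u. (x < i \<longleftrightarrow> x < j) \<and> (i < x \<longleftrightarrow> j < x)"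
  shows "ascL (u @ [i]) = ascL (u @ [j]) \<and> desL (u @ [i]) = desL (u @ [j])"
proof (cases u rule: rev_cases)
  case Nil then show ?thesis by simp
next
  case (snoc u0 a)
  then have "a \<in> set u" by simp
  with assms have "(a < i \<longleftrightarrow> a < j) \<and> (i < a \<longleftrightarrow> j < a)" by blast
  then show ?thesis using snoc
    by (simp add: ascL_app[of u0 a "[i]"] ascL_app[of u0 a "[j]"]
        desL_app[of u0 a "[i]"] desL_app[of u0 a "[j]"])
qed

lemma core_des:
  assumes "i < n" "j < n" "\<forall>x\<in>set u. (x < i \<longleftrightarrow> x < j) \<and> (i < x \<longleftrightarrow> j < x)"
  shows "des (u @ i # n # j # v) = des (u @ j # v) + 1"
proof -
  have "desL (u @ i # n # j # v) = desL (u @ [i]) + desL (i # n # j # v)" by (rule desL_app)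
  moreover have "desL (u @ j # v) = desL (u @ [j]) + desL (j # v)" by (rule desL_app)
  moreover have "desL (i # n # j # v) = 1 + desL (j # v)" using assms(1,2) by simp
  ultimately show ?thesis using last_swap[OF assms(3)] unfolding des_L by linarith
qed

lemma core_height:
  assumes "i < n" "j < n" "\<forall>x\<in>set u. (x < i \<longleftrightarrow> x < j) \<and> (i < x \<longleftrightarrow> j < x)"
  shows "height (u @ [i]) = height (u @ [j])"
    "height (u @ [i, n]) = height (u @ [i]) + 1"
    "height (u @ i # n # j # r) = height (u @ [i]) + height (j # r)"
    "height (u @ j # r) = height (u @ [j]) + height (j # r)"
proof -
  show "height (u @ [i]) = height (u @ [j])"
    using last_swap[OF assms(3)] unfolding height_L by simp
  have "height (u @ i # [n]) = height (u @ [i]) + height [i, n]" by (rule height_app)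
  moreover have "height [i, n] = 1" using assms(1) by (simp add: height_L)
  ultimately show "height (u @ [i, n]) = height (u @ [i]) + 1" by simp
  have "height (u @ i # n # j # r) = height (u @ [i]) + height (i # n # j # r)" by (rule height_app)
  moreover have "height (i # n # j # r) = height (j # r)" using assms(1,2) by (simp add: height_L)
  ultimately show "height (u @ i # n # j # r) = height (u @ [i]) + height (j # r)" by simp
  show "height (u @ j # r) = height (u @ [j]) + height (j # r)" by (rule height_app)
qed

lemma ballotD: "ballot w \<Longrightarrow> k \<le> length w \<Longrightarrow> 0 \<le> height (take k w)"
  unfolding ballot_def by blast

lemma core_ballot:
  assumes "i < n" "j < n" "\<forall>x\<in>set u. (x < i \<longleftrightarrow> x < j) \<and> (i < x \<longleftrightarrow> j < x)"
  shows "ballot (u @ i # n # j # v) \<longleftrightarrow> ballot (u @ j # v)"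
proof
  assume B: "ballot (u @ i # n # j # v)"
  show "ballot (u @ j # v)" unfolding ballot_def
  proof (intro allI impI)
    fix k assume k: "k \<le> length (u @ j # v)"
    show "0 \<le> height (take k (u @ j # v))"
    proof (cases "k \<le> length u")
      case True
      have "0 \<le> height (take k (u @ i # n # j # v))" using ballotD[OF B, of k] True by simp
      then show ?thesis using True by simp
    next
      case False
      define m where "m = k - length u - 1"
      have m: "k = length u + 1 + m" "m \<le> length v" using k False by (auto simp: m_def)
      have "0 \<le> height (take (length u + 3 + m) (u @ i # n # j # v))" by (rule ballotD[OF B]) (use m in simp)
      moreover have "take (length u + 3 + m) (u @ i # n # j # v) = u @ i # n # j # take m v" by (simp add: numeral_3_eq_3)
      moreover have "take k (u @ j # v) = u @ j # take m v" using m by simp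
      ultimately show ?thesis using core_height(3,4)[OF assms, of "take m v"] core_height(1)[OF assms] by simp
    qed
  qed
next
  assume B: "ballot (u @ j # v)"
  show "ballot (u @ i # n # j # v)" unfolding ballot_def
  proof (intro allI impI)
    fix k assume k: "k \<le> length (u @ i # n # j # v)"
    have hu: "0 \<le> height (u @ [j])"
    proof -
      have "0 \<le> height (take (length u + 1) (u @ j # v))" by (rule ballotD[OF B]) simp
      then show ?thesis by simp
    qed
    show "0 \<le> height (take k (u @ i # n # j # v))"
    proof -
      consider "k \<le> length u" | "k = length u + 1" | "k = length u + 2"
        | m where "k = length u + 3 + m" "m \<le> length v"
      proof -
        assume a1: "k \<le> length u \<Longrightarrow> thesis" and a2: "k = length u + 1 \<Longrightarrow> thesis"
          and a3: "k = length u + 2 \<Longrightarrow> thesis"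
          and a4: "\<And>m. k = length u + 3 + m \<Longrightarrow> m \<le> length v \<Longrightarrow> thesis"
        show thesis
        proof (cases "k \<le> length u")
          case True then show ?thesis using a1 by blast
        next
          case F1: False
          show ?thesis
          proof (cases "k = length u + 1")
            case True then show ?thesis using a2 by blast
          next
            case F2: False
            show ?thesis
            proof (cases "k = length u + 2")
              case True then show ?thesis using a3 by blast
            next
              case F3: False
              have "k = length u + 3 + (k - length u - 3)" using F1 F2 F3 by arith
              moreover have "k - length u - 3 \<le> length v" using k by simp
              ultimately show ?thesis using a4 by blast
            qed
          qed
        qed
      qed
      then show ?thesis
      proof cases
        case 1
        have "0 \<le> height (take k (u @ j # v))" using ballotD[OF B, of k] 1 by simp
        then show ?thesis using 1 by simp
      next
        case 2 then show ?thesis using hu core_height(1,2)[OF assms] by simp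
      next
        case 3 then show ?thesis using hu core_height(1,2)[OF assms] by (simp add: numeral_2_eq_2)
      next
        case 4
        have "0 \<le> height (take (length u + 1 + m) (u @ j # v))" by (rule ballotD[OF B]) (use 4 in simp)
        moreover have "take (length u + 1 + m) (u @ j # v) = u @ j # take m v" by simp
        moreover have "take k (u @ i # n # j # v) = u @ i # n # j # take m v" using 4
          by (simp add: numeral_3_eq_3)
        ultimately show ?thesis using core_height(3,4)[OF assms, of "take m v"] core_height(1)[OF assms] by simp
      qed
    qed
  qed
qed



definition W :: "nat set \<Rightarrow> (nat \<Rightarrow> nat) \<Rightarrow> nat" where
  "W S \<sigma> = (\<Sum>C \<in> cyc \<sigma> ` S. min (cdes \<sigma> C) (casc \<sigma> C))"
definition Od :: "nat set \<Rightarrow> (nat \<Rightarrow> nat) \<Rightarrow> bool" where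
  "Od S \<sigma> \<longleftrightarrow> (\<forall>C \<in> cyc \<sigma> ` S. odd (card C))"

lemma cyc_orbit: "permutation \<sigma> \<Longrightarrow> cyc \<sigma> = orbit \<sigma>"
  by (rule ext) (simp add: cyc_def orbit_altdef_permutation)

lemma orbit_same: "permutation \<sigma> \<Longrightarrow> y \<in> orbit \<sigma> x \<Longrightarrow> orbit \<sigma> y = orbit \<sigma> x"
  by (meson cyclic_on_orbit' orbit_cyclic_eq3)

lemma funpow_in: "\<sigma> permutes S \<Longrightarrow> x \<in> S \<Longrightarrow> (\<sigma> ^^ k) x \<in> S"
  by (induction k) (auto simp: permutes_in_image)

lemma permutesI':
  assumes "finite S" "f ` S \<subseteq> S" "inj_on f S" "\<And>x. x \<notin> S \<Longrightarrow> f x = x"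
  shows "f permutes S"
proof (rule bij_imp_permutes)
  have "f ` S = S" using endo_inj_surj[OF assms(1,2,3)] .
  then show "bij_betw f S S" using assms(3) by (simp add: bij_betw_def)
qed (use assms(4) in auto)

lemma conj_lemma:
  assumes fin: "finite S" and ps: "\<sigma> permutes S" and pt: "\<tau> permutes T"
    and hS: "h ` S = T" and mono: "\<And>x y. x \<in> S \<Longrightarrow> y \<in> S \<Longrightarrow> x < y \<Longrightarrow> h x < h y"
    and comm: "\<And>x. x \<in> S \<Longrightarrow> \<tau> (h x) = h (\<sigma> x)"
  shows "W T \<tau> = W S \<sigma> \<and> (Od T \<tau> \<longleftrightarrow> Od S \<sigma>)"
proof -
  have inj: "inj_on h S"
    by (rule inj_onI) (metis mono linorder_neqE_nat less_irrefl)
  have mono2: "h x < h y \<longleftrightarrow> x < y" if "x \<in> S" "y \<in> S" for x y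
    using mono[OF that] mono[OF that(2,1)] by (metis less_asym linorder_neqE_nat)
  have pw: "(\<tau> ^^ k) (h x) = h ((\<sigma> ^^ k) x)" if "x \<in> S" for x k
    by (induction k) (auto simp: comm funpow_in[OF ps that])
  have cycS: "cyc \<sigma> x \<subseteq> S" if "x \<in> S" for x
    using funpow_in[OF ps that] by (auto simp: cyc_def)
  have cyceq: "cyc \<tau> (h x) = h ` cyc \<sigma> x" if "x \<in> S" for x
    using pw[OF that] by (auto simp: cyc_def)
  have imgT: "cyc \<tau> ` T = (image h) ` (cyc \<sigma> ` S)"
  proof -
    have "cyc \<tau> ` T = (\<lambda>x. cyc \<tau> (h x)) ` S" unfolding hS[symmetric] image_image ..
    also have "\<dots> = (\<lambda>x. h ` cyc \<sigma> x) ` S" using cyceq by (rule image_cong[OF refl])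
    also have "\<dots> = (image h) ` (cyc \<sigma> ` S)" by (simp add: image_image)
    finally show ?thesis .
  qed
  have injI: "inj_on (image h) (cyc \<sigma> ` S)"
    by (rule inj_onI) (use inj_on_image_eq_iff[OF inj] cycS in auto)
  have Feq: "cdes \<tau> (h ` C) = cdes \<sigma> C \<and> casc \<tau> (h ` C) = casc \<sigma> C \<and> card (h ` C) = card C"
    if "C \<in> cyc \<sigma> ` S" for C
  proof -
    from that obtain x where x: "x \<in> S" "C = cyc \<sigma> x" by auto
    have CS: "C \<subseteq> S" using cycS x by simp
    have injC: "inj_on h C" using inj CS inj_on_subset by blast
    have key1: "(\<tau> (h c) < h c) = (\<sigma> c < c)" "(h c < \<tau> (h c)) = (c < \<sigma> c)" if "c \<in> C" for c
    proof -
      have cS: "c \<in> S" "\<sigma> c \<in> S" using that CS permutes_in_image[OF ps] by auto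
      show "(\<tau> (h c) < h c) = (\<sigma> c < c)" "(h c < \<tau> (h c)) = (c < \<sigma> c)"
        using comm[OF cS(1)] mono2[OF cS] mono2[OF cS(2,1)] by auto
    qed
    have "{y \<in> h ` C. \<tau> y < y} = h ` {y \<in> C. \<sigma> y < y}"
      using key1 by auto
    moreover have "{y \<in> h ` C. y < \<tau> y} = h ` {y \<in> C. y < \<sigma> y}"
      using key1 by auto
    ultimately show ?thesis unfolding cdes_def casc_def
      using card_image[OF inj_on_subset[OF injC]] card_image[OF injC] by auto
  qed
  have "W T \<tau> = (\<Sum>C \<in> cyc \<sigma> ` S. min (cdes \<tau> (h ` C)) (casc \<tau> (h ` C)))"
    unfolding W_def imgT by (simp add: sum.reindex[OF injI])
  also have "\<dots> = W S \<sigma>" unfolding W_def by (rule sum.cong) (use Feq in auto)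
  finally show ?thesis unfolding Od_def imgT using Feq by auto
qed



lemma splice_lemma:
  fixes U :: "nat set" and \<pi> \<rho> :: "nat \<Rightarrow> nat"
  assumes fin: "finite U" and perm: "\<pi> permutes U" and iU: "i \<in> U" and nU: "n \<in> U"
    and lt: "i < n" "j < n" "i \<noteq> j" and pi: "\<pi> i = n" "\<pi> n = j"
    and adj: "\<And>y. y \<noteq> i \<Longrightarrow> y \<noteq> j \<Longrightarrow> (i < y \<longleftrightarrow> j < y)"
    and rho: "\<rho> = (\<lambda>x. if x = i \<or> x = n then x else if \<pi> x = i then j else \<pi> x)"
  shows "\<rho> permutes (U - {i,n}) \<and> W U \<pi> = W (U - {i,n}) \<rho> + 1 \<and> (Od U \<pi> \<longleftrightarrow> Od (U - {i,n}) \<rho>)"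
proof -
  define S where "S = U - {i,n}"
  have jU: "j \<in> U" using pi nU permutes_in_image[OF perm] by metis
  have jS: "j \<in> S" using jU lt by (auto simp: S_def)
  have injp: "\<pi> x = \<pi> y \<Longrightarrow> x = y" for x y using permutes_inj[OF perm] by (auto dest: injD)
  have pinU: "x \<in> U \<Longrightarrow> \<pi> x \<in> U" for x using permutes_in_image[OF perm] by simp
  have rS: "\<rho> permutes S"
  proof (rule permutesI')
    show "finite S" using fin by (simp add: S_def)
    show "\<rho> ` S \<subseteq> S"
    proof
      fix y assume "y \<in> \<rho> ` S"
      then obtain x where x: "x \<in> S" "y = \<rho> x" by auto
      show "y \<in> S"
      proof (cases "\<pi> x = i")
        case True then show ?thesis using x jS by (auto simp: rho S_def)
      next
        case False
        have "\<pi> x \<noteq> n" using x pi injp by (auto simp: S_def)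
        then show ?thesis using False x pinU by (auto simp: rho S_def)
      qed
    qed
    show "inj_on \<rho> S"
    proof (rule inj_onI)
      fix x y assume xy: "x \<in> S" "y \<in> S" "\<rho> x = \<rho> y"
      then show "x = y" using injp pi by (auto simp: rho S_def split: if_splits)
    qed
    show "\<rho> x = x" if "x \<notin> S" for x
    proof (cases "x \<in> U")
      case False
      then have "\<pi> x = x" using permutes_not_in[OF perm] by blast
      then show ?thesis using False iU by (auto simp: rho)
    qed (use that in \<open>auto simp: rho S_def\<close>)
  qed
  have finS: "finite S" using fin by (simp add: S_def)
  have pp: "permutation \<pi>" using fin perm permutation_permutes by blast
  have pr: "permutation \<rho>" using finS rS permutation_permutes by blast
  define C0 where "C0 = orbit \<pi> i"
  have nC0: "n \<in> C0" unfolding C0_def using orbit.base[of \<pi> i] pi by simp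
  have jC0: "j \<in> C0" unfolding C0_def using orbit.step[OF nC0[unfolded C0_def]] pi by simp
  have iC0: "i \<in> C0" unfolding C0_def using permutation_self_in_orbit[OF pp] .
  have C0U: "C0 \<subseteq> U" unfolding C0_def using permutes_orbit_subset[OF perm iU] .
  have finC0: "finite C0" using C0U fin finite_subset by blast
  have C0j: "orbit \<pi> j = C0" unfolding C0_def using orbit_same[OF pp jC0[unfolded C0_def]] .
  have C0stepI: "y \<in> C0 \<Longrightarrow> \<pi> y \<in> C0" for y unfolding C0_def by (rule orbit.step)
  have notC0: "\<pi> x \<noteq> i" if "x \<notin> C0" for x
  proof
    assume "\<pi> x = i"
    then have "i \<in> orbit \<pi> x" using orbit.base[of \<pi> x] by simp
    then have "orbit \<pi> i = orbit \<pi> x" using orbit_same[OF pp] by blast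
    then show False using that permutation_self_in_orbit[OF pp, of x] by (simp add: C0_def)
  qed
  have disj: "orbit \<pi> x \<inter> C0 = {}" if "x \<notin> C0" for x
  proof -
    { fix y assume y: "y \<in> orbit \<pi> x" "y \<in> C0"
      then have "orbit \<pi> x = orbit \<pi> y" using orbit_same[OF pp] by metis
      also have "\<dots> = C0" using y orbit_same[OF pp] unfolding C0_def by metis
      finally have False using that permutation_self_in_orbit[OF pp, of x] by simp }
    then show ?thesis by blast
  qed
  have req: "\<rho> y = \<pi> y" if "y \<notin> C0" for y
    using that notC0[OF that] iC0 nC0 by (auto simp: rho)
  have oreq: "orbit \<rho> x = orbit \<pi> x" if "x \<notin> C0" for x
    by (rule orbit_cong[OF permutation_self_in_orbit[OF pp]]) (use disj[OF that] req in blast)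
  define C1 where "C1 = C0 - {i,n}"
  have inv1: "\<rho> y \<in> C1" if "y \<in> C1" for y
  proof (cases "\<pi> y = i")
    case True then show ?thesis using that jC0 lt by (auto simp: rho C1_def)
  next
    case False
    have "\<pi> y \<noteq> n" using that pi injp by (auto simp: C1_def)
    then show ?thesis using False that C0stepI by (auto simp: rho C1_def)
  qed
  have jC1: "j \<in> C1" using jC0 lt by (auto simp: C1_def)
  have oC1: "orbit \<rho> j = C1"
  proof
    show "orbit \<rho> j \<subseteq> C1"
    proof
      fix y assume "y \<in> orbit \<rho> j" then show "y \<in> C1"
        by induct (use inv1 jC1 in auto)
    qed
    have "y \<notin> {i,n} \<longrightarrow> y \<in> orbit \<rho> j" if "y \<in> orbit \<pi> j" for y
      using that
    proof induct
      case base
      show ?case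
      proof
        assume a: "\<pi> j \<notin> {i,n}"
        then have "\<rho> j = \<pi> j" using lt by (auto simp: rho)
        then show "\<pi> j \<in> orbit \<rho> j" using orbit.base[of \<rho> j] by simp
      qed
    next
      case (step y)
      show ?case
      proof
        assume a: "\<pi> y \<notin> {i,n}"
        show "\<pi> y \<in> orbit \<rho> j"
        proof (cases "y \<in> {i,n}")
          case True
          then have "y = n" using a pi by auto
          then show ?thesis using pi permutation_self_in_orbit[OF pr] by simp
        next
          case False
          then have "y \<in> orbit \<rho> j" using step by blast
          moreover have "\<rho> y = \<pi> y" using False a by (auto simp: rho)
          ultimately show ?thesis using orbit.step[of y \<rho> j] by simp
        qed
      qed
    qed
    then show "C1 \<subseteq> orbit \<rho> j" using C0j by (auto simp: C1_def)
  qed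
  define R where "R = orbit \<pi> ` (U - C0)"
  have cp: "cyc \<pi> = orbit \<pi>" using cyc_orbit[OF pp] .
  have cr: "cyc \<rho> = orbit \<rho>" using cyc_orbit[OF pr] .
  have Up: "orbit \<pi> ` U = insert C0 R"
  proof -
    have "orbit \<pi> x = C0" if "x \<in> C0" for x
      using that orbit_same[OF pp] unfolding C0_def by blast
    then show ?thesis unfolding R_def using iU C0U unfolding C0_def by blast
  qed
  have Sp: "orbit \<rho> ` S = insert C1 R"
  proof -
    have a: "orbit \<rho> x = C1" if "x \<in> C1" for x
      using that orbit_same[OF pr] oC1 by blast
    have b: "orbit \<rho> x = orbit \<pi> x" if "x \<in> S - C0" for x using that oreq by blast
    have c: "S - C0 = U - C0" using iC0 nC0 by (auto simp: S_def)
    have d: "S \<inter> C0 = C1" using C0U by (auto simp: S_def C1_def)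
    have "S = C1 \<union> (S - C0)" using d by blast
    then have "orbit \<rho> ` S = orbit \<rho> ` C1 \<union> orbit \<rho> ` (S - C0)" by (metis image_Un)
    also have "orbit \<rho> ` C1 = {C1}" using a jC1 by blast
    also have "orbit \<rho> ` (S - C0) = R" unfolding R_def c[symmetric] using b by (auto simp: image_iff)
    finally show ?thesis by simp
  qed
  have C0R: "C0 \<notin> R" unfolding R_def
    using permutation_self_in_orbit[OF pp] by blast
  have C1R: "C1 \<notin> R" unfolding R_def using disj jC1 by (auto simp: C1_def)
  have finR: "finite R" unfolding R_def using fin by simp
  have FR: "cdes \<rho> D = cdes \<pi> D \<and> casc \<rho> D = casc \<pi> D" if "D \<in> R" for D
  proof -
    from that obtain x where x: "x \<notin> C0" "D = orbit \<pi> x" by (auto simp: R_def)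
    have "\<forall>y\<in>D. \<rho> y = \<pi> y" using disj[OF x(1)] req x by blast
    then show ?thesis unfolding cdes_def casc_def
      by (metis (no_types, lifting) Collect_cong)
  qed
  have cardC: "card C0 = card C1 + 2"
  proof -
    have "card C1 = card C0 - card {i,n}" unfolding C1_def
      by (rule card_Diff_subset) (use iC0 nC0 in auto)
    moreover have "card {i,n} = 2" using lt by simp
    moreover have "card {i,n} \<le> card C0" using iC0 nC0 finC0 by (intro card_mono) auto
    ultimately show ?thesis by simp
  qed
  have F0: "min (cdes \<pi> C0) (casc \<pi> C0) = min (cdes \<rho> C1) (casc \<rho> C1) + 1"
  proof (cases "\<pi> j = i")
    case True
    have "C0 \<subseteq> {i,n,j}"
    proof
      fix y assume "y \<in> C0" then show "y \<in> {i,n,j}" unfolding C0_def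
        by induct (use pi True in auto)
    qed
    then have C0e: "C0 = {i,n,j}" using iC0 nC0 jC0 by auto
    then have C1e: "C1 = {j}" using lt by (auto simp: C1_def)
    have rj: "\<rho> j = j" using True lt by (auto simp: rho)
    have r1: "cdes \<rho> C1 = 0" "casc \<rho> C1 = 0" using rj C1e by (auto simp: cdes_def casc_def)
    have "{y \<in> C0. \<pi> y < y} = (if i < j then {n,j} else {n})"
      using C0e pi True lt by auto
    moreover have "{y \<in> C0. y < \<pi> y} = (if i < j then {i} else {i,j})"
      using C0e pi True lt by auto
    ultimately show ?thesis using r1 lt unfolding cdes_def casc_def by auto
  next
    case False
    have e1: "{y \<in> C0. \<pi> y < y} = insert n {y \<in> C1. \<rho> y < y}"
    proof (intro set_eqI iffI)
      fix y assume y: "y \<in> {y \<in> C0. \<pi> y < y}"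
      show "y \<in> insert n {y \<in> C1. \<rho> y < y}"
      proof (cases "y \<in> {i,n}")
        case True then show ?thesis using y pi lt by auto
      next
        case F2: False
        then have yC1: "y \<in> C1" using y by (auto simp: C1_def)
        show ?thesis
        proof (cases "\<pi> y = i")
          case True
          then have "y \<noteq> j" using False by auto
          then show ?thesis using adj[of y] F2 True y yC1 by (auto simp: rho)
        next
          case F3: False then show ?thesis using F2 y yC1 by (auto simp: rho)
        qed
      qed
    next
      fix y assume y: "y \<in> insert n {y \<in> C1. \<rho> y < y}"
      show "y \<in> {y \<in> C0. \<pi> y < y}"
      proof (cases "y = n")
        case True then show ?thesis using nC0 pi lt by auto
      next
        case F2: False
        then have yC1: "y \<in> C1" "\<rho> y < y" using y by auto
        then have yy: "y \<noteq> i" "y \<noteq> n" "y \<in> C0" by (auto simp: C1_def)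
        show ?thesis
        proof (cases "\<pi> y = i")
          case True
          then have "y \<noteq> j" using False by auto
          then show ?thesis using adj[of y] yy True yC1 by (auto simp: rho)
        next
          case F3: False then show ?thesis using yy yC1 by (auto simp: rho)
        qed
      qed
    qed
    have e2: "{y \<in> C0. y < \<pi> y} = insert i {y \<in> C1. y < \<rho> y}"
    proof (intro set_eqI iffI)
      fix y assume y: "y \<in> {y \<in> C0. y < \<pi> y}"
      show "y \<in> insert i {y \<in> C1. y < \<rho> y}"
      proof (cases "y \<in> {i,n}")
        case True then show ?thesis using y pi lt by auto
      next
        case F2: False
        then have yC1: "y \<in> C1" using y by (auto simp: C1_def)
        show ?thesis
        proof (cases "\<pi> y = i")
          case True
          then have "y \<noteq> j" using False by auto
          then show ?thesis using adj[of y] F2 True y yC1 by (auto simp: rho)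
        next
          case F3: False then show ?thesis using F2 y yC1 by (auto simp: rho)
        qed
      qed
    next
      fix y assume y: "y \<in> insert i {y \<in> C1. y < \<rho> y}"
      show "y \<in> {y \<in> C0. y < \<pi> y}"
      proof (cases "y = i")
        case True then show ?thesis using iC0 pi lt by auto
      next
        case F2: False
        then have yC1: "y \<in> C1" "y < \<rho> y" using y by auto
        then have yy: "y \<noteq> i" "y \<noteq> n" "y \<in> C0" by (auto simp: C1_def)
        show ?thesis
        proof (cases "\<pi> y = i")
          case True
          then have "y \<noteq> j" using False by auto
          then show ?thesis using adj[of y] yy True yC1 by (auto simp: rho)
        next
          case F3: False then show ?thesis using yy yC1 by (auto simp: rho)
        qed
      qed
    qed
    have finC1: "finite C1" using finC0 by (simp add: C1_def)
    have "n \<notin> C1" "i \<notin> C1" by (auto simp: C1_def)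
    then show ?thesis unfolding cdes_def casc_def e1 e2 using finC1 by simp
  qed
  have "W U \<pi> = min (cdes \<pi> C0) (casc \<pi> C0) + (\<Sum>D\<in>R. min (cdes \<pi> D) (casc \<pi> D))"
    unfolding W_def cp Up using finR C0R by simp
  moreover have "W S \<rho> = min (cdes \<rho> C1) (casc \<rho> C1) + (\<Sum>D\<in>R. min (cdes \<rho> D) (casc \<rho> D))"
    unfolding W_def cr Sp using finR C1R by simp
  moreover have "(\<Sum>D\<in>R. min (cdes \<rho> D) (casc \<rho> D)) = (\<Sum>D\<in>R. min (cdes \<pi> D) (casc \<pi> D))"
    using FR by (intro sum.cong) auto
  ultimately have "W U \<pi> = W S \<rho> + 1" using F0 by simp
  moreover have "Od U \<pi> \<longleftrightarrow> Od S \<rho>"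
    unfolding Od_def cp cr Up Sp using cardC by auto
  ultimately show ?thesis using rS by (simp add: S_def)
qed



definition dn :: "nat \<Rightarrow> nat \<Rightarrow> nat" where "dn i x = (if i < x then x - 1 else x)"
definition upi :: "nat \<Rightarrow> nat \<Rightarrow> nat" where "upi i x = (if i \<le> x then x + 1 else x)"

lemma dn_upi[simp]: "dn i (upi i x) = x" by (simp add: dn_def upi_def)
lemma upi_dn: "x \<noteq> i \<Longrightarrow> upi i (dn i x) = x" by (auto simp: dn_def upi_def)
lemma dn_mono: "x \<noteq> i \<Longrightarrow> y \<noteq> i \<Longrightarrow> (dn i x < dn i y) = (x < y)" by (auto simp: dn_def)
lemma upi_mono: "(upi i x < upi i y) = (x < y)" by (auto simp: upi_def)
lemma upi_inj: "upi i x = upi i y \<Longrightarrow> x = y" by (auto simp: upi_def split: if_splits)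
lemma dn_inj: "x \<noteq> i \<Longrightarrow> y \<noteq> i \<Longrightarrow> dn i x = dn i y \<Longrightarrow> x = y"
  by (metis upi_dn)

lemma img_dn: assumes "1 \<le> i" "i < n" shows "dn i ` ({1..n} - {i,n}) = {1..n-2}"
proof
  show "dn i ` ({1..n} - {i,n}) \<subseteq> {1..n-2}" using assms by (auto simp: dn_def)
  show "{1..n-2} \<subseteq> dn i ` ({1..n} - {i,n})"
  proof
    fix y assume y: "y \<in> {1..n-2}"
    then have "upi i y \<in> {1..n} - {i,n}" using assms by (auto simp: upi_def)
    then show "y \<in> dn i ` ({1..n} - {i,n})" by (metis dn_upi image_eqI)
  qed
qed

lemma img_upi: assumes "1 \<le> i" "i < n" shows "upi i ` {1..n-2} = {1..n} - {i,n}"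
proof -
  have "upi i ` {1..n-2} = upi i ` dn i ` ({1..n} - {i,n})" using img_dn[OF assms] by simp
  also have "\<dots> = (\<lambda>x. x) ` ({1..n} - {i,n})" unfolding image_image
    by (rule image_cong) (auto simp: upi_dn)
  also have "\<dots> = {1..n} - {i,n}" by simp
  finally show ?thesis .
qed

lemma relabel:
  assumes "\<And>x y. x \<in> set w \<Longrightarrow> y \<in> set w \<Longrightarrow> (h x < h y) = (x < y)"
  shows "asc (map h w) = asc w \<and> des (map h w) = des w"
proof -
  have a: "(map h w ! t < map h w ! Suc t) = (w ! t < w ! Suc t)"
       "(map h w ! Suc t < map h w ! t) = (w ! Suc t < w ! t)" if "Suc t < length w" for t
    using that assms[of "w ! t" "w ! Suc t"] assms[of "w ! Suc t" "w ! t"] by auto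
  show ?thesis unfolding asc_def des_def
    by (intro conjI arg_cong[where f=card] Collect_cong) (use a in auto)
qed

lemma relabel_ballot:
  assumes "\<And>x y. x \<in> set w \<Longrightarrow> y \<in> set w \<Longrightarrow> (h x < h y) = (x < y)"
  shows "des (map h w) = des w \<and> (ballot (map h w) \<longleftrightarrow> ballot w)"
proof -
  have "height (take k (map h w)) = height (take k w)" for k
  proof -
    have "\<And>x y. x \<in> set (take k w) \<Longrightarrow> y \<in> set (take k w) \<Longrightarrow> (h x < h y) = (x < y)"
      using assms by (meson in_set_takeD)
    then show ?thesis using relabel[of "take k w" h] by (simp add: height_def take_map)
  qed
  then show ?thesis using relabel[OF assms] unfolding ballot_def by simp
qed

lemma concat_id: "\<forall>x\<in>set u. x \<noteq> j \<Longrightarrow> concat (map (\<lambda>x. if x = j then [i,n,j] else [x]) u) = u"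
  by (induction u) auto

lemma filt_id: "\<forall>x\<in>set u. x \<noteq> i \<and> x \<noteq> n \<Longrightarrow> filter (\<lambda>x. x \<noteq> i \<and> x \<noteq> n) u = u"
  by (induction u) auto

lemma split3:
  assumes "t + 2 < length w" "w ! t = i" "w ! (t + 1) = n" "w ! (t + 2) = j"
  shows "w = take t w @ i # n # j # drop (t + 3) w"
proof -
  have "drop t w = w ! t # drop (Suc t) w" using assms(1) by (simp add: Cons_nth_drop_Suc)
  moreover have "drop (Suc t) w = w ! (t+1) # drop (Suc (Suc t)) w" using assms(1) by (simp add: Cons_nth_drop_Suc)
  moreover have "drop (Suc (Suc t)) w = w ! (t+2) # drop (t + 3) w" using assms(1)
    by (simp add: Cons_nth_drop_Suc numeral_3_eq_3)
  ultimately show ?thesis using assms(2-4) by (metis append_take_drop_id)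
qed



lemma corr:
  assumes lt: "1 \<le> i" "i < n" "1 \<le> j" "j < n" "i \<noteq> j"
    and adj: "\<And>y. y \<noteq> i \<Longrightarrow> y \<noteq> j \<Longrightarrow> (i < y \<longleftrightarrow> j < y) \<and> (y < i \<longleftrightarrow> y < j)"
    and nu: "i \<notin> set u" "n \<notin> set u" "j \<notin> set u"
    and nv: "i \<notin> set v" "n \<notin> set v" "j \<notin> set v"
  shows "(u @ i # n # j # v \<in> ballot_perms n d) \<longleftrightarrow>
     (distinct (u @ j # v) \<and> set (u @ j # v) = {1..n} - {i,n} \<and> ballot (u @ j # v) \<and> int (des (u @ j # v)) = d - 1)"
proof -
  have au: "\<forall>x\<in>set u. (x < i \<longleftrightarrow> x < j) \<and> (i < x \<longleftrightarrow> j < x)"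
  proof
    fix x assume "x \<in> set u"
    then have "x \<noteq> i" "x \<noteq> j" using nu by auto
    then show "(x < i \<longleftrightarrow> x < j) \<and> (i < x \<longleftrightarrow> j < x)" using adj by blast
  qed
  have d1: "distinct (u @ i # n # j # v) \<longleftrightarrow> distinct (u @ j # v)"
    using nu nv lt by simp
  have s1: "set (u @ i # n # j # v) = insert i (insert n (set (u @ j # v)))" by auto
  have s2: "i \<notin> set (u @ j # v)" "n \<notin> set (u @ j # v)" using nu nv lt by auto
  have s3: "set (u @ i # n # j # v) = {1..n} \<longleftrightarrow> set (u @ j # v) = {1..n} - {i,n}"
  proof
    assume h: "set (u @ i # n # j # v) = {1..n}"
    have "set (u @ j # v) = set (u @ i # n # j # v) - {i,n}" using s1 s2 by blast
    also have "\<dots> = {1..n} - {i,n}" by (simp only: h)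
    finally show "set (u @ j # v) = {1..n} - {i,n}" .
  next
    assume a: "set (u @ j # v) = {1..n} - {i,n}"
    have "i \<in> {1..n}" "n \<in> {1..n}" using lt by auto
    then show "set (u @ i # n # j # v) = {1..n}" unfolding s1 a by blast
  qed
  have cb: "ballot (u @ i # n # j # v) = ballot (u @ j # v)" using core_ballot[OF lt(2,4) au] .
  have de: "(int (des (u @ i # n # j # v)) = d) = (int (des (u @ j # v)) = d - 1)"
    using core_des[OF lt(2,4) au, of v] by linarith
  show ?thesis unfolding ballot_perms_def mem_Collect_eq
    by (simp only: d1 s3 cb de)
qed

lemma part_b:
  assumes lt: "1 \<le> i" "i < n" "1 \<le> j" "j < n" "i \<noteq> j"
    and adj: "\<And>y. y \<noteq> i \<Longrightarrow> y \<noteq> j \<Longrightarrow> (i < y \<longleftrightarrow> j < y) \<and> (y < i \<longleftrightarrow> y < j)"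
  shows "b_factor n d i j = b (n - 2) (d - 1)"
proof -
  define A where "A = {w \<in> ballot_perms n d.
      \<exists>t. t + 2 < length w \<and> w ! t = i \<and> w ! (t + 1) = n \<and> w ! (t + 2) = j}"
  define P where "P = {w. distinct w \<and> set w = {1..n} - {i,n} \<and> ballot w \<and> int (des w) = d - 1}"
  define B where "B = ballot_perms (n - 2) (d - 1)"
  define F where "F = (\<lambda>x. if x = j then [i,n,j] else [x])"
  define fl where "fl = filter (\<lambda>x. x \<noteq> i \<and> x \<noteq> n)"
  have decA: "\<exists>u v. w = u @ i # n # j # v \<and> i \<notin> set u \<and> n \<notin> set u \<and> j \<notin> set u
      \<and> i \<notin> set v \<and> n \<notin> set v \<and> j \<notin> set v" if "w \<in> A" for w
  proof -
    from that obtain t where t: "t + 2 < length w" "w ! t = i" "w ! (t + 1) = n" "w ! (t + 2) = j"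
      and dw: "distinct w" by (auto simp: A_def ballot_perms_def)
    define u where "u = take t w"
    define v where "v = drop (t + 3) w"
    have w: "w = u @ i # n # j # v" using split3[OF t] by (simp add: u_def v_def)
    show ?thesis using dw lt by (subst (asm) w) (intro exI[of _ u] exI[of _ v], auto simp: w)
  qed
  have glue: "concat (map F (u @ j # v)) = u @ i # n # j # v \<and> fl (u @ i # n # j # v) = u @ j # v"
    if "i \<notin> set u" "n \<notin> set u" "j \<notin> set u" "i \<notin> set v" "n \<notin> set v" "j \<notin> set v" for u v
  proof -
    have a: "\<forall>x\<in>set u. x \<noteq> j" "\<forall>x\<in>set v. x \<noteq> j"
      "\<forall>x\<in>set u. x \<noteq> i \<and> x \<noteq> n" "\<forall>x\<in>set v. x \<noteq> i \<and> x \<noteq> n"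
      using that by auto
    show ?thesis using lt concat_id[OF a(1), of i n] concat_id[OF a(2), of i n] filt_id[OF a(3)] filt_id[OF a(4)]
      by (simp add: F_def fl_def)
  qed
  have AP: "bij_betw fl A P"
  proof (rule bij_betw_byWitness[where f' = "\<lambda>w. concat (map F w)"])
    show "\<forall>a\<in>A. concat (map F (fl a)) = a"
    proof
      fix w assume "w \<in> A"
      then obtain u v where "w = u @ i # n # j # v" "i \<notin> set u" "n \<notin> set u" "j \<notin> set u"
        "i \<notin> set v" "n \<notin> set v" "j \<notin> set v" using decA by blast
      then show "concat (map F (fl w)) = w" using glue by simp
    qed
    show "fl ` A \<subseteq> P"
    proof
      fix w' assume "w' \<in> fl ` A"
      then obtain w where w: "w \<in> A" "w' = fl w" by auto
      then obtain u v where uv: "w = u @ i # n # j # v" "i \<notin> set u" "n \<notin> set u" "j \<notin> set u"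
        "i \<notin> set v" "n \<notin> set v" "j \<notin> set v" using decA by blast
      have "w \<in> ballot_perms n d" using w by (simp add: A_def)
      then show "w' \<in> P" using corr[OF lt adj uv(2-7), of d] glue[OF uv(2-7)] w uv(1)
        by (simp add: P_def)
    qed
    have decP: "\<exists>u v. w = u @ j # v \<and> i \<notin> set u \<and> n \<notin> set u \<and> j \<notin> set u
      \<and> i \<notin> set v \<and> n \<notin> set v \<and> j \<notin> set v" if "w \<in> P" for w
    proof -
      have dw: "distinct w" "set w = {1..n} - {i,n}" using that by (auto simp: P_def)
      then have "j \<in> set w" using lt by auto
      then obtain u v where w: "w = u @ j # v" by (meson split_list)
      show ?thesis using dw lt w by auto
    qed
    show "\<forall>a'\<in>P. fl (concat (map F a')) = a'"
    proof
      fix w assume "w \<in> P"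
      then obtain u v where "w = u @ j # v" "i \<notin> set u" "n \<notin> set u" "j \<notin> set u"
        "i \<notin> set v" "n \<notin> set v" "j \<notin> set v" using decP by blast
      then show "fl (concat (map F w)) = w" using glue by simp
    qed
    show "(\<lambda>w. concat (map F w)) ` P \<subseteq> A"
    proof
      fix w' assume "w' \<in> (\<lambda>w. concat (map F w)) ` P"
      then obtain w where w: "w \<in> P" "w' = concat (map F w)" by auto
      then obtain u v where uv: "w = u @ j # v" "i \<notin> set u" "n \<notin> set u" "j \<notin> set u"
        "i \<notin> set v" "n \<notin> set v" "j \<notin> set v" using decP by blast
      have w': "w' = u @ i # n # j # v" using glue[OF uv(2-7)] w uv by simp
      have "w' \<in> ballot_perms n d" using corr[OF lt adj uv(2-7), of d] w uv w' by (simp add: P_def)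
      moreover have "length u + 2 < length w' \<and> w' ! (length u) = i \<and> w' ! (length u + 1) = n
          \<and> w' ! (length u + 2) = j" using w' by (simp add: nth_append)
      ultimately show "w' \<in> A" unfolding A_def by blast
    qed
  qed
  have PB: "bij_betw (map (dn i)) P B"
  proof (rule bij_betw_byWitness[where f' = "map (upi i)"])
    show "\<forall>a\<in>P. map (upi i) (map (dn i) a) = a"
    proof
      fix w assume "w \<in> P"
      then have iw: "i \<notin> set w" by (auto simp: P_def)
      show "map (upi i) (map (dn i) w) = w" unfolding map_map
      proof (intro map_idI)
        fix x assume "x \<in> set w"
        then have "x \<noteq> i" using iw by auto
        then show "(upi i \<circ> dn i) x = x" by (simp add: upi_dn)
      qed
    qed
    show "\<forall>a'\<in>B. map (dn i) (map (upi i) a') = a'" by (simp add: comp_def)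
    show "map (dn i) ` P \<subseteq> B"
    proof
      fix w' assume "w' \<in> map (dn i) ` P"
      then obtain w where w: "w \<in> P" "w' = map (dn i) w" by auto
      have iw: "i \<notin> set w" and dw: "distinct w" and sw: "set w = {1..n} - {i,n}"
        and bw: "ballot w" and ew: "int (des w) = d - 1" using w by (auto simp: P_def)
      have ord: "\<And>x y. x \<in> set w \<Longrightarrow> y \<in> set w \<Longrightarrow> (dn i x < dn i y) = (x < y)"
        using iw dn_mono by metis
      have "inj_on (dn i) (set w)" using iw dn_inj by (metis inj_onI)
      then have "distinct w'" using dw w by (simp add: distinct_map)
      moreover have "set w' = {1..n-2}" using w sw img_dn[OF lt(1,2)] by simp
      ultimately show "w' \<in> B" using relabel_ballot[OF ord] bw ew w
        by (simp add: B_def ballot_perms_def)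
    qed
    show "map (upi i) ` B \<subseteq> P"
    proof
      fix w' assume "w' \<in> map (upi i) ` B"
      then obtain w where w: "w \<in> B" "w' = map (upi i) w" by auto
      have dw: "distinct w" and sw: "set w = {1..n-2}"
        and bw: "ballot w" and ew: "int (des w) = d - 1" using w by (auto simp: B_def ballot_perms_def)
      have ord: "\<And>x y. x \<in> set w \<Longrightarrow> y \<in> set w \<Longrightarrow> (upi i x < upi i y) = (x < y)"
        using upi_mono by metis
      have "inj_on (upi i) (set w)" using upi_inj by (metis inj_onI)
      then have "distinct w'" using dw w by (simp add: distinct_map)
      moreover have "set w' = {1..n} - {i,n}" using w sw img_upi[OF lt(1,2)] by simp
      ultimately show "w' \<in> P" using relabel_ballot[OF ord] bw ew w
        by (simp add: P_def)
    qed
  qed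
  have "b_factor n d i j = card A" by (simp add: b_factor_def A_def)
  also have "\<dots> = card P" using AP by (rule bij_betw_same_card)
  also have "\<dots> = card B" using PB by (rule bij_betw_same_card)
  also have "\<dots> = b (n - 2) (d - 1)" by (simp add: b_def B_def)
  finally show ?thesis .
qed



lemma odd_eq: "odd_perms m e = {\<pi>. \<pi> permutes {1..m} \<and> Od {1..m} \<pi> \<and> int (W {1..m} \<pi>) = e}"
  by (simp add: odd_perms_def odd_order_def Od_def cweight_def W_def cycles_of_def)

lemma part_p:
  assumes lt: "1 \<le> i" "i < n" "1 \<le> j" "j < n" "i \<noteq> j"
    and adj: "\<And>y. y \<noteq> i \<Longrightarrow> y \<noteq> j \<Longrightarrow> (i < y \<longleftrightarrow> j < y) \<and> (y < i \<longleftrightarrow> y < j)"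
  shows "p_factor n d i j = p (n - 2) (d - 1)"
proof -
  define U where "U = {1..n}"
  define S where "S = U - {i,n}"
  define T where "T = {1..n-2}"
  define A where "A = {\<pi> \<in> odd_perms n d. \<pi> i = n \<and> \<pi> n = j}"
  define P where "P = {\<rho>. \<rho> permutes S \<and> Od S \<rho> \<and> int (W S \<rho>) = d - 1}"
  define B where "B = odd_perms (n - 2) (d - 1)"
  define spl where "spl = (\<lambda>\<pi>::nat \<Rightarrow> nat. (\<lambda>x. if x = i \<or> x = n then x else if \<pi> x = i then j else \<pi> x))"
  define ins where "ins = (\<lambda>\<rho>::nat \<Rightarrow> nat. (\<lambda>x. if x = i then n else if x = n then j else if \<rho> x = j then i else \<rho> x))"
  define cj where "cj = (\<lambda>\<rho>::nat \<Rightarrow> nat. (\<lambda>x. if x \<in> T then dn i (\<rho> (upi i x)) else x))"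
  define dc where "dc = (\<lambda>\<tau>::nat \<Rightarrow> nat. (\<lambda>x. if x \<in> S then upi i (\<tau> (dn i x)) else x))"
  have finU: "finite U" by (simp add: U_def)
  have finS: "finite S" by (simp add: S_def U_def)
  have finT: "finite T" by (simp add: T_def)
  have iU: "i \<in> U" "n \<in> U" "j \<in> U" using lt by (auto simp: U_def)
  have jS: "j \<in> S" "i \<notin> S" "n \<notin> S" using lt by (auto simp: U_def S_def)
  have adj1: "\<And>y. y \<noteq> i \<Longrightarrow> y \<noteq> j \<Longrightarrow> (i < y \<longleftrightarrow> j < y)" using adj by blast
  have SP: "spl \<pi> permutes S \<and> W U \<pi> = W S (spl \<pi>) + 1 \<and> (Od U \<pi> \<longleftrightarrow> Od S (spl \<pi>))"
     if "\<pi> permutes U" "\<pi> i = n" "\<pi> n = j" for \<pi>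
    using splice_lemma[OF finU that(1) iU(1,2) lt(2,4,5) that(2,3) adj1, of "spl \<pi>"]
    by (simp add: spl_def S_def)
  have spl_ins: "spl (ins \<rho>) = \<rho>" if rp: "\<rho> permutes S" for \<rho>
  proof
    fix x
    show "spl (ins \<rho>) x = \<rho> x"
    proof (cases "x = i \<or> x = n")
      case True then have "\<rho> x = x" using permutes_not_in[OF rp] jS by auto
      then show ?thesis using True by (simp add: spl_def)
    next
      case False
      have "\<rho> x \<noteq> i"
      proof (cases "x \<in> S")
        case True then have "\<rho> x \<in> S" using permutes_in_image[OF rp] by simp
        then show ?thesis using jS by auto
      next
        case F2: False then have "\<rho> x = x" using permutes_not_in[OF rp] by simp
        then show ?thesis using False by simp
      qed
      then show ?thesis using False lt by (auto simp: spl_def ins_def)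
    qed
  qed
  have AP: "bij_betw spl A P"
  proof (rule bij_betw_byWitness[where f' = ins])
    show "\<forall>\<pi>\<in>A. ins (spl \<pi>) = \<pi>"
    proof
      fix \<pi> assume \<pi>: "\<pi> \<in> A"
      have pp0: "\<pi> \<in> odd_perms n d" "\<pi> i = n" "\<pi> n = j" using \<pi> by (simp_all add: A_def)
      have pp: "\<pi> permutes U" "\<pi> i = n" "\<pi> n = j" using pp0 by (simp_all add: odd_eq U_def)
      have injp: "\<pi> x = \<pi> y \<Longrightarrow> x = y" for x y using permutes_inj[OF pp(1)] unfolding inj_def by blast
      show "ins (spl \<pi>) = \<pi>"
      proof
        fix x show "ins (spl \<pi>) x = \<pi> x"
        proof (cases "x = i \<or> x = n")
          case True then show ?thesis using pp(2,3) lt by (auto simp: ins_def spl_def)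
        next
          case False
          have "\<pi> x \<noteq> j" using injp[of x n] pp(3) False by auto
          then show ?thesis using False by (simp add: ins_def spl_def)
        qed
      qed
    qed
    show "spl ` A \<subseteq> P"
    proof
      fix \<rho> assume "\<rho> \<in> spl ` A"
      then obtain \<pi> where \<pi>: "\<pi> \<in> A" "\<rho> = spl \<pi>" by auto
      have pp0: "\<pi> \<in> odd_perms n d" "\<pi> i = n" "\<pi> n = j" using \<pi> by (simp_all add: A_def)
      have pp: "\<pi> permutes U" "\<pi> i = n" "\<pi> n = j" "Od U \<pi>" "int (W U \<pi>) = d"
        using pp0 by (simp_all add: odd_eq U_def)
      show "\<rho> \<in> P" using SP[OF pp(1-3)] pp(4,5) \<pi>(2) by (auto simp: P_def)
    qed
    show "\<forall>\<rho>\<in>P. spl (ins \<rho>) = \<rho>" using spl_ins by (auto simp: P_def)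
    show "ins ` P \<subseteq> A"
    proof
      fix \<pi> assume "\<pi> \<in> ins ` P"
      then obtain \<rho> where \<rho>: "\<rho> \<in> P" "\<pi> = ins \<rho>" by auto
      have rp: "\<rho> permutes S" "Od S \<rho>" "int (W S \<rho>) = d - 1" using \<rho> by (auto simp: P_def)
      have rin: "x \<in> S \<Longrightarrow> \<rho> x \<in> S" for x using permutes_in_image[OF rp(1)] by simp
      have rout: "x \<notin> S \<Longrightarrow> \<rho> x = x" for x using permutes_not_in[OF rp(1)] by simp
      have injr: "\<rho> x = \<rho> y \<Longrightarrow> x = y" for x y using permutes_inj[OF rp(1)] by (auto dest: injD)
      have pi: "\<pi> i = n" "\<pi> n = j" using \<rho>(2) lt by (auto simp: ins_def)
      have pS: "x \<in> S \<Longrightarrow> \<pi> x = (if \<rho> x = j then i else \<rho> x)" for x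
        using \<rho>(2) jS by (auto simp: ins_def)
      have pU: "\<pi> permutes U"
      proof (rule permutesI'[OF finU])
        show "\<pi> ` U \<subseteq> U"
        proof
          fix y assume "y \<in> \<pi> ` U"
          then obtain x where x: "x \<in> U" "y = \<pi> x" by auto
          show "y \<in> U"
          proof (cases "x = i \<or> x = n")
            case True then show ?thesis using x pi iU by auto
          next
            case False then have "x \<in> S" using x by (simp add: S_def)
            then show ?thesis using rin[of x] pS[of x] x iU by (auto simp: S_def)
          qed
        qed
        show "inj_on \<pi> U"
        proof (rule inj_onI)
          fix x y assume xy: "x \<in> U" "y \<in> U" "\<pi> x = \<pi> y"
          have cx: "x = i \<or> x = n \<or> x \<in> S" "y = i \<or> y = n \<or> y \<in> S" using xy by (auto simp: S_def)
          have key: "\<pi> z \<noteq> n \<and> \<pi> z \<noteq> j" if "z \<in> S" for z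
          proof (cases "\<rho> z = j")
            case True then have "\<pi> z = i" using pS[OF that] by simp
            then show ?thesis using lt by simp
          next
            case False then have "\<pi> z = \<rho> z" "\<rho> z \<in> S" using pS[OF that] rin[OF that] by simp_all
            then show ?thesis using False jS by metis
          qed
          have key2: "x = y" if "x \<in> S" "y \<in> S"
          proof -
            have "\<rho> x = \<rho> y"
            proof (cases "\<rho> x = j")
              case True
              then have px: "\<pi> x = i" using pS[OF that(1)] by simp
              show ?thesis
              proof (cases "\<rho> y = j")
                case True then show ?thesis using \<open>\<rho> x = j\<close> by simp
              next
                case False then have "\<pi> y = \<rho> y" "\<rho> y \<in> S" using pS[OF that(2)] rin[OF that(2)] by simp_all
                then have "i \<in> S" using px xy(3) by simp
                then show ?thesis using jS(2) by simp
              qed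
            next
              case False
              then have px: "\<pi> x = \<rho> x" "\<rho> x \<in> S" using pS[OF that(1)] rin[OF that(1)] by simp_all
              show ?thesis
              proof (cases "\<rho> y = j")
                case True then have "\<pi> y = i" using pS[OF that(2)] by simp
                then have "i \<in> S" using px xy(3) by simp
                then show ?thesis using jS(2) by simp
              next
                case False then have "\<pi> y = \<rho> y" using pS[OF that(2)] by simp
                then show ?thesis using px xy(3) by simp
              qed
            qed
            then show ?thesis using injr by blast
          qed
          have nj: "n \<noteq> j" using lt by simp
          show "x = y"
          proof -
            { assume "x = i" "y = n" then have False using xy(3) pi nj by simp }
            moreover { assume "x = n" "y = i" then have False using xy(3) pi nj by simp }
            moreover { assume "x = i" "y \<in> S" then have False using xy(3) pi key[of y] by simp }
            moreover { assume "x = n" "y \<in> S" then have False using xy(3) pi key[of y] by simp }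
            moreover { assume "y = i" "x \<in> S" then have False using xy(3) pi key[of x] by simp }
            moreover { assume "y = n" "x \<in> S" then have False using xy(3) pi key[of x] by simp }
            ultimately show ?thesis using cx key2 by blast
          qed
        qed
        show "\<pi> x = x" if "x \<notin> U" for x
        proof -
          have "x \<notin> S" "x \<noteq> i" "x \<noteq> n" "x \<noteq> j" using that iU by (auto simp: S_def)
          then show ?thesis using rout[of x] \<rho>(2) by (simp add: ins_def)
        qed
      qed
      have "spl \<pi> = \<rho>" using spl_ins[OF rp(1)] \<rho>(2) by simp
      then have sp: "W U \<pi> = W S \<rho> + 1" "Od U \<pi> \<longleftrightarrow> Od S \<rho>" using SP[OF pU pi] by simp_all
      have "\<pi> permutes {1..n} \<and> Od {1..n} \<pi> \<and> int (W {1..n} \<pi>) = d"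
        using pU sp rp(2,3) unfolding U_def by simp
      then have "\<pi> \<in> odd_perms n d" unfolding odd_eq by simp
      then show "\<pi> \<in> A" using pi unfolding A_def by blast
    qed
  qed
  have dnS: "dn i ` S = T" using img_dn[OF lt(1,2)] by (simp add: S_def U_def T_def)
  have upT: "upi i ` T = S" using img_upi[OF lt(1,2)] by (simp add: S_def U_def T_def)
  have dnS': "x \<in> S \<Longrightarrow> dn i x \<in> T" for x using dnS by blast
  have upT': "x \<in> T \<Longrightarrow> upi i x \<in> S" for x using upT by blast
  have upd: "x \<in> S \<Longrightarrow> upi i (dn i x) = x" for x using jS upi_dn by metis
  have monoS: "\<And>x y. x \<in> S \<Longrightarrow> y \<in> S \<Longrightarrow> x < y \<Longrightarrow> dn i x < dn i y"
    using jS dn_mono by metis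
  have CL: "W T \<tau> = W S \<rho> \<and> (Od T \<tau> \<longleftrightarrow> Od S \<rho>)"
    if "\<rho> permutes S" "\<tau> permutes T" "\<And>x. x \<in> S \<Longrightarrow> \<tau> (dn i x) = dn i (\<rho> x)" for \<rho> \<tau>
    by (rule conj_lemma[OF finS that(1,2) dnS monoS that(3)])
  have cj_perm: "cj \<rho> permutes T" if rp: "\<rho> permutes S" for \<rho>
  proof (rule permutesI'[OF finT])
    have rin: "x \<in> S \<Longrightarrow> \<rho> x \<in> S" for x using permutes_in_image[OF rp] by simp
    have injr: "\<rho> x = \<rho> y \<Longrightarrow> x = y" for x y using permutes_inj[OF rp] by (auto dest: injD)
    show "cj \<rho> ` T \<subseteq> T" using rin upT' dnS' by (auto simp: cj_def)
    show "inj_on (cj \<rho>) T"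
    proof (rule inj_onI)
      fix x y assume xy: "x \<in> T" "y \<in> T" "cj \<rho> x = cj \<rho> y"
      then have "dn i (\<rho> (upi i x)) = dn i (\<rho> (upi i y))" by (simp add: cj_def)
      moreover have "\<rho> (upi i x) \<in> S" "\<rho> (upi i y) \<in> S" using xy rin upT' by auto
      ultimately have "\<rho> (upi i x) = \<rho> (upi i y)" using dn_inj jS by metis
      then show "x = y" using injr upi_inj by metis
    qed
    show "cj \<rho> x = x" if "x \<notin> T" for x using that by (simp add: cj_def)
  qed
  have cj_comm: "cj \<rho> (dn i x) = dn i (\<rho> x)" if "x \<in> S" for \<rho> x
    using that dnS' upd by (simp add: cj_def)
  have dc_perm: "dc \<tau> permutes S" if tp: "\<tau> permutes T" for \<tau>
  proof (rule permutesI'[OF finS])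
    have tin: "x \<in> T \<Longrightarrow> \<tau> x \<in> T" for x using permutes_in_image[OF tp] by simp
    have injt: "\<tau> x = \<tau> y \<Longrightarrow> x = y" for x y using permutes_inj[OF tp] by (auto dest: injD)
    show "dc \<tau> ` S \<subseteq> S" using tin upT' dnS' by (auto simp: dc_def)
    show "inj_on (dc \<tau>) S"
    proof (rule inj_onI)
      fix x y assume xy: "x \<in> S" "y \<in> S" "dc \<tau> x = dc \<tau> y"
      then have "upi i (\<tau> (dn i x)) = upi i (\<tau> (dn i y))" by (simp add: dc_def)
      then have "dn i x = dn i y" using upi_inj injt by metis
      then show "x = y" using xy upd by metis
    qed
    show "dc \<tau> x = x" if "x \<notin> S" for x using that by (simp add: dc_def)
  qed
  have dc_comm: "\<tau> (dn i x) = dn i (dc \<tau> x)" if "x \<in> S" for \<tau> x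
    using that by (simp add: dc_def)
  have PB: "bij_betw cj P B"
  proof (rule bij_betw_byWitness[where f' = dc])
    show "\<forall>\<rho>\<in>P. dc (cj \<rho>) = \<rho>"
    proof
      fix \<rho> assume "\<rho> \<in> P"
      then have rp: "\<rho> permutes S" by (simp add: P_def)
      show "dc (cj \<rho>) = \<rho>"
      proof
        fix x show "dc (cj \<rho>) x = \<rho> x"
        proof (cases "x \<in> S")
          case True
          then have "\<rho> x \<in> S" using permutes_in_image[OF rp] by simp
          then show ?thesis using True cj_comm upd by (simp add: dc_def)
        next
          case False then show ?thesis using permutes_not_in[OF rp] by (simp add: dc_def)
        qed
      qed
    qed
    show "\<forall>\<tau>\<in>B. cj (dc \<tau>) = \<tau>"
    proof
      fix \<tau> assume "\<tau> \<in> B"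
      then have tp: "\<tau> permutes T" by (simp add: B_def odd_eq T_def)
      show "cj (dc \<tau>) = \<tau>"
      proof
        fix x show "cj (dc \<tau>) x = \<tau> x"
        proof (cases "x \<in> T")
          case True
          then show ?thesis using upT' by (simp add: cj_def dc_def)
        next
          case False then show ?thesis using permutes_not_in[OF tp] by (simp add: cj_def)
        qed
      qed
    qed
    show "cj ` P \<subseteq> B"
    proof
      fix \<tau> assume "\<tau> \<in> cj ` P"
      then obtain \<rho> where \<rho>: "\<rho> \<in> P" "\<tau> = cj \<rho>" by auto
      have rp: "\<rho> permutes S" "Od S \<rho>" "int (W S \<rho>) = d - 1" using \<rho> by (auto simp: P_def)
      have tp: "\<tau> permutes T" using cj_perm[OF rp(1)] \<rho>(2) by simp
      have "W T \<tau> = W S \<rho> \<and> (Od T \<tau> \<longleftrightarrow> Od S \<rho>)"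
        by (rule CL[OF rp(1) tp]) (simp add: \<rho>(2) cj_comm)
      then show "\<tau> \<in> B" using tp rp by (simp add: B_def odd_eq T_def)
    qed
    show "dc ` B \<subseteq> P"
    proof
      fix \<rho> assume "\<rho> \<in> dc ` B"
      then obtain \<tau> where \<tau>: "\<tau> \<in> B" "\<rho> = dc \<tau>" by auto
      have tp: "\<tau> permutes T" "Od T \<tau>" "int (W T \<tau>) = d - 1" using \<tau> by (auto simp: B_def odd_eq T_def)
      have rp: "\<rho> permutes S" using dc_perm[OF tp(1)] \<tau>(2) by simp
      have "W T \<tau> = W S \<rho> \<and> (Od T \<tau> \<longleftrightarrow> Od S \<rho>)"
        by (rule CL[OF rp tp(1)]) (simp add: \<tau>(2) dc_comm)
      then show "\<rho> \<in> P" using tp rp by (simp add: P_def)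
    qed
  qed
  have "p_factor n d i j = card A" by (simp add: p_factor_def A_def)
  also have "\<dots> = card P" using AP by (rule bij_betw_same_card)
  also have "\<dots> = card B" using PB by (rule bij_betw_same_card)
  also have "\<dots> = p (n - 2) (d - 1)" by (simp add: p_def B_def)
  finally show ?thesis .
qed

theorem lemma2p1:
  fixes n i j :: nat and d :: int
  assumes "n \<ge> 3" and "i \<in> {1..n-1}" and "j \<in> {1..n-1}"
    and "\<bar>int i - int j\<bar> = 1"
  shows "b_factor n d i j = b (n - 2) (d - 1) \<and> p_factor n d i j = p (n - 2) (d - 1)"
proof -
  have lt: "1 \<le> i" "i < n" "1 \<le> j" "j < n" using assms(1-3) by auto
  have ij: "j = i + 1 \<or> i = j + 1" using assms(4) by arith
  then have ne: "i \<noteq> j" by auto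
  have adj: "(i < y \<longleftrightarrow> j < y) \<and> (y < i \<longleftrightarrow> y < j)" if "y \<noteq> i" "y \<noteq> j" for y
    using ij that by auto
  show ?thesis using part_b[OF lt ne adj] part_p[OF lt ne adj] by simp
qed

end
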